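(* Assume the setup (S) of the context. Let $\phi\colon H\oplus H^*\to\bigwedge^{\mathrm{even}}H$ be the map $x\mapsto x\cdot s$, and let $\phi^*\colon(\bigwedge^{\mathrm{even}}H)^*\to (H\oplus H^* )^*\cong H\oplus H^*$ be its dual (identification via $\beta$). Then $\operatorname{im}\phi^*\subseteq\operatorname{im}\delta_3$. In particular, the element $(s_1,0)\in H\oplus H^*$ lies in $\operatorname{im}\delta_3$, so there exists $u\in B_1^*$ with $\delta_3(u)=(s_1,0)$.
   Context: Setup (S): $R$ is a Noetherian unique factorization domain with $1/2\in R$; $p\ge1$, $q\ge3$, $n=p+2$; $B_0=R^{q-2}$, $B_1=R^{p+q}$, $H=R^n$. On $H\oplus H^*$ let $Q(f,f')=f'(f)$ and $\beta\big((f,f'),(g,g')\big)=f'(g)+g'(f)$, which identifies $(H\oplus H^* )^*$ with $H\oplus H^*$. Let $\mathbb{B}\colon 0\to B_0^*\xrightarrow{\delta_4}B_1^*\xrightarrow{\delta_3}H\oplus H^*\xrightarrow{\delta_2}B_1\xrightarrow{\delta_1}B_0$ be an acyclic complex with $\delta_2=\delta_3^*$ and $\delta_1=\delta_4^*$ (duals taken using $\beta$). The Clifford action of $H\oplus H^*$ on $\bigwedge H$ is $(f,f')\cdot\omega=f\wedge\omega+\iota_{f'}(\omega)$, where $\iota_{f'}(e_1\wedge\cdots\wedge e_j)=\sum_i(-1)^{i-1}f'(e_i)\,e_1\wedge\cdots\widehat{e_i}\cdots\wedge e_j$. Let $s\in\bigwedge^{\mathrm{odd}}H$ (the spinor coordinates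 of $\mathbb{B}$) be an element such that for every prime $\mathfrak p\notin\operatorname{Supp}H_0(\mathbb{B})$, the image of $s$ generates the $R_{\mathfrak p}$-module $\{\omega\in\bigwedge H_{\mathfrak p}: x\cdot\omega=0\ \forall x\in(\operatorname{im}\delta_3)_{\mathfrak p}\}$ (this encodes that $\operatorname{im}\delta_3$ and $H^*$ lie in different families of maximal isotropic subspaces). Let $s_1\in H$ be the degree-one component of $s$. *)

theory Defs
  imports "HOL-Computational_Algebra.Factorial_Ring" "Jordan_Normal_Form.Matrix"
begin

definition is_ideal :: "'a::comm_ring_1 set \<Rightarrow> bool" where
  "is_ideal I \<longleftrightarrow> 0 \<in> I \<and> (\<forall>a\<in>I. \<forall>b\<in>I. a + b \<in> I) \<and> (\<forall>r. \<forall>a\<in>I. r * a \<in> I)"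

definition is_prime_ideal :: "'a::comm_ring_1 set \<Rightarrow> bool" where
  "is_prime_ideal P \<longleftrightarrow> is_ideal P \<and> 1 \<notin> P \<and> (\<forall>a b. a * b \<in> P \<longrightarrow> a \<in> P \<or> b \<in> P)"

definition noetherian_ring :: "'a::comm_ring_1 itself \<Rightarrow> bool" where
  "noetherian_ring _ \<longleftrightarrow> (\<forall>I::'a set. is_ideal I \<longrightarrow>
      (\<exists>F. finite F \<and> F \<subseteq> I \<and> I = {\<Sum>f\<in>F. c f * f | c. True}))"

text \<open>Elements of H + H^* (H = R^n) are vectors of dimension 2n: coordinates
  0..n-1 are the H-part (standard basis e_i), coordinates n..2n-1 are the
  H^*-part (dual basis e_i^*).\<close>

definition beta :: "nat \<Rightarrow> 'a::comm_ring_1 vec \<Rightarrow> 'a vec \<Rightarrow> 'a" where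
  "beta n x y = (\<Sum>i<n. x $ (n + i) * y $ i + y $ (n + i) * x $ i)"

text \<open>Gram matrix of beta; used to take duals with respect to beta.\<close>
definition Jmat :: "nat \<Rightarrow> 'a::comm_ring_1 mat" where
  "Jmat n = mat (2 * n) (2 * n) (\<lambda>(i, j). if j = i + n \<or> i = j + n then 1 else 0)"

definition exact_at :: "nat \<Rightarrow> 'a::comm_ring_1 mat \<Rightarrow> 'a mat \<Rightarrow> bool" where
  "exact_at m A B \<longleftrightarrow> (\<forall>v\<in>carrier_vec m. A *\<^sub>v v = 0\<^sub>v (dim_row A) \<longrightarrow>
      (\<exists>w\<in>carrier_vec (dim_col B). B *\<^sub>v w = v))"

text \<open>An element of the exterior algebra is given by its coordinates with respect
  to the basis e_S = e_{i1} wedge ... wedge e_{ik} (i1 < ... < ik, S = {i1,..,ik} \<subseteq> {0..<n}).\<close>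

definition ext :: "nat \<Rightarrow> (nat set \<Rightarrow> 'a::zero) set" where
  "ext n = {\<omega>. \<forall>S. \<not> S \<subseteq> {..<n} \<longrightarrow> \<omega> S = 0}"

definition ext_odd :: "nat \<Rightarrow> (nat set \<Rightarrow> 'a::zero) set" where
  "ext_odd n = {\<omega>\<in>ext n. \<forall>S. even (card S) \<longrightarrow> \<omega> S = 0}"

definition ext_even :: "nat \<Rightarrow> (nat set \<Rightarrow> 'a::zero) set" where
  "ext_even n = {\<omega>\<in>ext n. \<forall>S. odd (card S) \<longrightarrow> \<omega> S = 0}"

definition ext_smult :: "'a::times \<Rightarrow> (nat set \<Rightarrow> 'a) \<Rightarrow> nat set \<Rightarrow> 'a" where
  "ext_smult r \<omega> = (\<lambda>S. r * \<omega> S)"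

text \<open>f wedge omega, for f in H given by coordinates f i (i < n).\<close>
definition wedge1 :: "nat \<Rightarrow> (nat \<Rightarrow> 'a::comm_ring_1) \<Rightarrow> (nat set \<Rightarrow> 'a) \<Rightarrow> nat set \<Rightarrow> 'a" where
  "wedge1 n f \<omega> = (\<lambda>S. if S \<subseteq> {..<n} then
      (\<Sum>i\<in>S. (-1) ^ card {j\<in>S. j < i} * f i * \<omega> (S - {i})) else 0)"

text \<open>Contraction iota_{f'}(omega), for f' in H^* given by coordinates f' i (i < n)
  w.r.t. the dual basis; iota(e_T) = sum over i in T of (-1)^(position of i in T - 1) f'(e_i) e_(T-{i}).\<close>
definition contr :: "nat \<Rightarrow> (nat \<Rightarrow> 'a::comm_ring_1) \<Rightarrow> (nat set \<Rightarrow> 'a) \<Rightarrow> nat set \<Rightarrow> 'a" where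
  "contr n f' \<omega> = (\<lambda>S. if S \<subseteq> {..<n} then
      (\<Sum>i\<in>{..<n} - S. (-1) ^ card {j\<in>S. j < i} * f' i * \<omega> (insert i S)) else 0)"

definition clifford :: "nat \<Rightarrow> 'a::comm_ring_1 vec \<Rightarrow> (nat set \<Rightarrow> 'a) \<Rightarrow> nat set \<Rightarrow> 'a" where
  "clifford n x \<omega> = (\<lambda>S. wedge1 n (\<lambda>i. x $ i) \<omega> S + contr n (\<lambda>i. x $ (n + i)) \<omega> S)"

text \<open>P is not in Supp H_0(B), where H_0(B) = coker(d1 : R^(p+q) -> R^(q-2)):
  (coker d1)_P = 0, i.e. every y/1 vanishes in the localization.\<close>
definition not_in_supp_coker :: "'a::comm_ring_1 set \<Rightarrow> nat \<Rightarrow> 'a mat \<Rightarrow> bool" where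
  "not_in_supp_coker P m d1 \<longleftrightarrow> (\<forall>y\<in>carrier_vec m. \<exists>u. u \<notin> P \<and>
      (\<exists>z\<in>carrier_vec (dim_col d1). d1 *\<^sub>v z = u \<cdot>\<^sub>v y))"

text \<open>omega/t in (wedge H)_P is annihilated by every x in (im d3)_P,
  i.e. for each b, (d3 b) . omega vanishes in (wedge H)_P (independent of denominators).\<close>
definition loc_annihilated :: "'a::comm_ring_1 set \<Rightarrow> nat \<Rightarrow> 'a mat \<Rightarrow> (nat set \<Rightarrow> 'a) \<Rightarrow> bool" where
  "loc_annihilated P n d3 \<omega> \<longleftrightarrow> (\<forall>b\<in>carrier_vec (dim_col d3). \<exists>u. u \<notin> P \<and>
      ext_smult u (clifford n (d3 *\<^sub>v b) \<omega>) = (\<lambda>S. 0))"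

text \<open>The image s/1 of s generates the R_P-module
  {omega in (wedge H)_P : x . omega = 0 for all x in (im d3)_P}.\<close>
definition loc_generates_annihilator :: "'a::comm_ring_1 set \<Rightarrow> nat \<Rightarrow> 'a mat \<Rightarrow> (nat set \<Rightarrow> 'a) \<Rightarrow> bool" where
  "loc_generates_annihilator P n d3 s \<longleftrightarrow>
     loc_annihilated P n d3 s \<and>
     (\<forall>\<omega>\<in>ext n. \<forall>t. t \<notin> P \<longrightarrow> loc_annihilated P n d3 \<omega> \<longrightarrow>
        (\<exists>r t'. t' \<notin> P \<and> (\<exists>u. u \<notin> P \<and>
           ext_smult u (\<lambda>S. t' * \<omega> S - t * r * s S) = (\<lambda>S. 0))))"

definition even_functional :: "nat \<Rightarrow> ((nat set \<Rightarrow> 'a::comm_ring_1) \<Rightarrow> 'a) \<Rightarrow> bool" where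
  "even_functional n lam \<longleftrightarrow>
     (\<forall>\<omega>\<in>ext_even n. \<forall>\<eta>\<in>ext_even n. lam (\<lambda>S. \<omega> S + \<eta> S) = lam \<omega> + lam \<eta>) \<and>
     (\<forall>r. \<forall>\<omega>\<in>ext_even n. lam (ext_smult r \<omega>) = r * lam \<omega>)"

text \<open>phi x = x . s ; phi^*(lambda) is the element y of H + H^* with
  beta y x = lambda (phi x) for all x (identification (H + H^*)^* = H + H^* via beta).\<close>
definition phi_dual :: "nat \<Rightarrow> (nat set \<Rightarrow> 'a::comm_ring_1) \<Rightarrow> ((nat set \<Rightarrow> 'a) \<Rightarrow> 'a) \<Rightarrow> 'a vec" where
  "phi_dual n s lam = (THE y. y \<in> carrier_vec (2 * n) \<and>
      (\<forall>x\<in>carrier_vec (2 * n). beta n y x = lam (clifford n x s)))"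

end

theory Submission
  imports Defs "Jordan_Normal_Form.Determinant" "Jordan_Normal_Form.Gauss_Jordan_Elimination"
begin


lemma field_surj:
  fixes B :: "'a::field mat"
  assumes B: "B \<in> carrier_mat nc nr"
    and inj: "\<And>w. w \<in> carrier_vec nc \<Longrightarrow> transpose_mat B *\<^sub>v w = 0\<^sub>v nr \<Longrightarrow> w = 0\<^sub>v nc"
    and y: "y \<in> carrier_vec nc"
  shows "\<exists>z\<in>carrier_vec nr. B *\<^sub>v z = y"
proof -
  obtain C where gC: "gauss_jordan_single B = C" by simp
  note G = gauss_jordan_single[OF B gC]
  from G(4) obtain P Q where CPB: "C = P * B" and P: "P \<in> carrier_mat nc nc" and Q: "Q \<in> carrier_mat nc nc"
    and PQ: "P * Q = 1\<^sub>m nc" and QP: "Q * P = 1\<^sub>m nc" by blast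
  have C: "C \<in> carrier_mat nc nr" by (rule G(2))
  from G(3) obtain f where pf: "pivot_fun C f nr" unfolding row_echelon_form_def using C by auto
  have dr: "dim_row C = nc" using C by auto
  note pD = pivot_funD[OF dr pf]
  have fl: "f i < nr" if i: "i < nc" for i
  proof (rule ccontr)
    assume "\<not> f i < nr"
    with pD(1)[OF i] have fi: "f i = nr" by auto
    have Cz: "C $$ (i, j) = 0" if "j < nr" for j using pD(2)[OF i] fi that by auto
    define w where "w = row P i"
    have w: "w \<in> carrier_vec nc" using P unfolding w_def by auto
    have "transpose_mat B *\<^sub>v w = 0\<^sub>v nr"
    proof (rule eq_vecI)
      fix j assume j: "j < dim_vec (0\<^sub>v nr :: 'a vec)"
      hence j: "j < nr" by simp
      have "(transpose_mat B *\<^sub>v w) $ j = col B j \<bullet> w" using B j by auto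
      also have "\<dots> = row P i \<bullet> col B j" unfolding w_def
        using B P by (metis col_carrier_vec comm_scalar_prod j row_carrier_vec i carrier_matD(1) carrier_matD(2))
      also have "\<dots> = C $$ (i, j)" unfolding CPB using P B i j by auto
      finally show "(transpose_mat B *\<^sub>v w) $ j = 0\<^sub>v nr $ j" using Cz[OF j] j by simp
    qed (use B in auto)
    from inj[OF w this] have "w = 0\<^sub>v nc" .
    hence "(P * Q) $$ (i, i) = 0" using P Q i unfolding w_def by (simp add: scalar_prod_def)
    with PQ i show False by simp
  qed
  define y' where "y' = P *\<^sub>v y"
  have y': "y' \<in> carrier_vec nc" using P y unfolding y'_def by auto
  define z where "z = vec nr (\<lambda>j. \<Sum>i<nc. if f i = j then y' $ i else 0)"
  have z: "z \<in> carrier_vec nr" unfolding z_def by auto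
  have Cz: "C *\<^sub>v z = y'"
  proof (rule eq_vecI)
    fix i' assume "i' < dim_vec y'"
    hence i': "i' < nc" using y' by auto
    have "(C *\<^sub>v z) $ i' = (\<Sum>j<nr. C $$ (i', j) * (\<Sum>i<nc. if f i = j then y' $ i else 0))"
      using C i' unfolding z_def by (auto simp: scalar_prod_def lessThan_atLeast0 intro!: sum.cong)
    also have "\<dots> = (\<Sum>j<nr. \<Sum>i<nc. if f i = j then C $$ (i', f i) * y' $ i else 0)"
      by (auto simp: sum_distrib_left intro!: sum.cong)
    also have "\<dots> = (\<Sum>i<nc. \<Sum>j<nr. if f i = j then C $$ (i', f i) * y' $ i else 0)"
      by (rule sum.swap)
    also have "\<dots> = (\<Sum>i<nc. C $$ (i', f i) * y' $ i)"
      using fl by (auto intro!: sum.cong)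
    also have "\<dots> = (\<Sum>i<nc. if i = i' then y' $ i else 0)"
      using pD(4,5) fl i' by (intro sum.cong) auto
    also have "\<dots> = y' $ i'" using i' by simp
    finally show "(C *\<^sub>v z) $ i' = y' $ i'" .
  qed (use C y' in auto)
  have "B *\<^sub>v z = (Q * P * B) *\<^sub>v z" using QP B by simp
  also have "\<dots> = Q *\<^sub>v (C *\<^sub>v z)" unfolding CPB using Q P B z
    by (metis assoc_mult_mat assoc_mult_mat_vec mult_carrier_mat)
  also have "\<dots> = Q *\<^sub>v (P *\<^sub>v y)" using Cz y'_def by simp
  also have "\<dots> = y" using Q P y QP by (metis assoc_mult_mat_vec one_mult_mat_vec)
  finally show ?thesis using z by blast
qed



lemma clear_denoms:
  fixes v :: "'a::idom fract vec"
  assumes v: "v \<in> carrier_vec n"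
  shows "\<exists>m w. m \<noteq> 0 \<and> w \<in> carrier_vec n \<and> to_fract m \<cdot>\<^sub>v v = map_vec to_fract w"
proof -
  let ?h = "to_fract :: 'a \<Rightarrow> 'a fract"
  interpret inj_comm_ring_hom ?h by (unfold_locales, auto)
    have "\<forall> i. \<exists> a b. v $ i = Fraction_Field.Fract a b \<and> b \<noteq> 0" using Fract_cases[of "v $ i" for i] by metis
    from choice[OF this] obtain a where "\<forall> i. \<exists> b. v $ i = Fraction_Field.Fract (a i) b \<and> b \<noteq> 0" by metis
    from choice[OF this] obtain b where vi: "\<And> i. v $ i = Fraction_Field.Fract (a i) (b i)" and bi: "\<And> i. b i \<noteq> 0" by auto
    define m where "m = prod_list (map b [0..<n])"
    let ?m = "?h m"
    have m0: "m \<noteq> 0" unfolding m_def hom_0_iff prod_list_zero_iff using bi by auto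
    {
      fix i
      assume "i < n"
      hence "b i \<in> set (map b [0 ..< n])" by auto
      from split_list[OF this]
        obtain ys zs where "map b [0..<n] = ys @ b i # zs" by auto
      hence "b i dvd m" unfolding m_def by auto
      then obtain c where "m = b i * c" ..
      hence "?m * v $ i = ?h (a i * c)" unfolding vi using bi[of i]
        by (simp add: eq_fract to_fract_def)
      hence "\<exists> c. ?m * v $ i = ?h c" ..
    }
    hence "\<forall> i. \<exists> c. i < n \<longrightarrow> ?m * v $ i = ?h c" by auto
    from choice[OF this] obtain c where c: "\<And> i. i < n \<Longrightarrow> ?m * v $ i = ?h (c i)" by auto
    define w where "w = vec n c"
    have w: "w \<in> carrier_vec n" unfolding w_def by simp
    have mvw: "?m \<cdot>\<^sub>v v = map_vec ?h w" unfolding w_def using c v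
      by (intro eq_vecI, auto)
    show ?thesis using m0 w mvw by blast
qed

lemma domain_surj:
  fixes A :: "'a::idom mat"
  assumes A: "A \<in> carrier_mat nr nc"
    and inj: "\<forall>v\<in>carrier_vec nc. A *\<^sub>v v = 0\<^sub>v nr \<longrightarrow> v = 0\<^sub>v nc"
    and y: "y \<in> carrier_vec nc"
  shows "\<exists>u. u \<noteq> 0 \<and> (\<exists>z\<in>carrier_vec nr. transpose_mat A *\<^sub>v z = u \<cdot>\<^sub>v y)"
proof -
  let ?h = "to_fract :: 'a \<Rightarrow> 'a fract"
  interpret inj_comm_ring_hom ?h by (unfold_locales, auto)
  let ?A = "map_mat ?h A"
  have AK: "?A \<in> carrier_mat nr nc" using A by auto
  have BK: "transpose_mat ?A \<in> carrier_mat nc nr" using A by auto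
  have injK: "w = 0\<^sub>v nc" if w: "w \<in> carrier_vec nc" and Aw: "transpose_mat (transpose_mat ?A) *\<^sub>v w = 0\<^sub>v nr" for w
  proof -
    from Aw have Aw: "?A *\<^sub>v w = 0\<^sub>v nr" by simp
    obtain m v where m0: "m \<noteq> 0" and v: "v \<in> carrier_vec nc" and mv: "?h m \<cdot>\<^sub>v w = map_vec ?h v"
      using clear_denoms[OF w] by blast
    from arg_cong[OF Aw, of "\<lambda> v. ?h m \<cdot>\<^sub>v v"]
    have "?h m \<cdot>\<^sub>v (?A *\<^sub>v w) = map_vec ?h (0\<^sub>v nr)" by auto
    also have "?h m \<cdot>\<^sub>v (?A *\<^sub>v w) = ?A *\<^sub>v (?h m \<cdot>\<^sub>v w)" using A w by auto
    also have "\<dots> = map_vec ?h (A *\<^sub>v v)" unfolding mv mult_mat_vec_hom[OF A v] ..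
    finally have "A *\<^sub>v v = 0\<^sub>v nr" by (rule vec_hom_inj)
    with inj v have v0: "v = 0\<^sub>v nc" by auto
    show ?thesis
    proof (rule eq_vecI)
      fix i assume "i < dim_vec (0\<^sub>v nc :: 'a fract vec)"
      hence i: "i < nc" by simp
      have "?h m * w $ i = ?h (v $ i)" using arg_cong[OF mv, of "\<lambda>x. x $ i"] i w v by auto
      hence "?h m * w $ i = 0" using v0 i by simp
      thus "w $ i = 0\<^sub>v nc $ i" using m0 i by simp
    qed (use w in auto)
  qed
  have yK: "map_vec ?h y \<in> carrier_vec nc" using y by auto
  obtain z where z: "z \<in> carrier_vec nr" and Bz: "transpose_mat ?A *\<^sub>v z = map_vec ?h y"
    using field_surj[OF BK injK yK] by blast
  obtain m w where m0: "m \<noteq> 0" and w: "w \<in> carrier_vec nr" and mz: "?h m \<cdot>\<^sub>v z = map_vec ?h w"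
    using clear_denoms[OF z] by blast
  have At: "transpose_mat A \<in> carrier_mat nc nr" using A by auto
  have "map_vec ?h (transpose_mat A *\<^sub>v w) = transpose_mat ?A *\<^sub>v map_vec ?h w"
    using mult_mat_vec_hom[OF At w] by (simp add: map_mat_transpose)
  also have "\<dots> = transpose_mat ?A *\<^sub>v (?h m \<cdot>\<^sub>v z)" using mz by simp
  also have "\<dots> = ?h m \<cdot>\<^sub>v (transpose_mat ?A *\<^sub>v z)" using BK z by auto
  also have "\<dots> = map_vec ?h (m \<cdot>\<^sub>v y)" unfolding Bz by (auto simp: hom_mult)
  finally have "transpose_mat A *\<^sub>v w = m \<cdot>\<^sub>v y" by (rule vec_hom_inj)
  thus ?thesis using m0 w by blast
qed



lemma wedge1_lin:
  assumes K: "finite K" and f: "\<And>i. i < n \<Longrightarrow> f i = (\<Sum>k\<in>K. c k * g k i)"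
  shows "wedge1 n f \<omega> S = (\<Sum>k\<in>K. c k * wedge1 n (g k) \<omega> S)"
proof (cases "S \<subseteq> {..<n}")
  case True
  have "wedge1 n f \<omega> S = (\<Sum>i\<in>S. (-1) ^ card {j\<in>S. j < i} * (\<Sum>k\<in>K. c k * g k i) * \<omega> (S - {i}))"
    using True f unfolding wedge1_def by (auto intro!: sum.cong)
  also have "\<dots> = (\<Sum>i\<in>S. \<Sum>k\<in>K. c k * ((-1) ^ card {j\<in>S. j < i} * g k i * \<omega> (S - {i})))"
    by (auto simp: sum_distrib_left sum_distrib_right ac_simps intro!: sum.cong)
  also have "\<dots> = (\<Sum>k\<in>K. \<Sum>i\<in>S. c k * ((-1) ^ card {j\<in>S. j < i} * g k i * \<omega> (S - {i})))"
    by (rule sum.swap)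
  also have "\<dots> = (\<Sum>k\<in>K. c k * wedge1 n (g k) \<omega> S)"
    using True unfolding wedge1_def by (auto simp: sum_distrib_left)
  finally show ?thesis .
qed (simp add: wedge1_def)

lemma contr_lin:
  assumes K: "finite K" and f: "\<And>i. i < n \<Longrightarrow> f i = (\<Sum>k\<in>K. c k * g k i)"
  shows "contr n f \<omega> S = (\<Sum>k\<in>K. c k * contr n (g k) \<omega> S)"
proof (cases "S \<subseteq> {..<n}")
  case True
  have "contr n f \<omega> S = (\<Sum>i\<in>{..<n} - S. (-1) ^ card {j\<in>S. j < i} * (\<Sum>k\<in>K. c k * g k i) * \<omega> (insert i S))"
    using True f unfolding contr_def by (auto intro!: sum.cong)
  also have "\<dots> = (\<Sum>i\<in>{..<n} - S. \<Sum>k\<in>K. c k * ((-1) ^ card {j\<in>S. j < i} * g k i * \<omega> (insert i S)))"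
    by (auto simp: sum_distrib_left sum_distrib_right ac_simps intro!: sum.cong)
  also have "\<dots> = (\<Sum>k\<in>K. \<Sum>i\<in>{..<n} - S. c k * ((-1) ^ card {j\<in>S. j < i} * g k i * \<omega> (insert i S)))"
    by (rule sum.swap)
  also have "\<dots> = (\<Sum>k\<in>K. c k * contr n (g k) \<omega> S)"
    using True unfolding contr_def by (auto simp: sum_distrib_left)
  finally show ?thesis .
qed (simp add: contr_def)

lemma coord_expand:
  fixes x :: "'a::comm_ring_1 vec"
  assumes "i < N"
  shows "x $ i = (\<Sum>k<N. x $ k * (unit_vec N k $ i))"
proof -
  have "(\<Sum>k<N. x $ k * (unit_vec N k $ i)) = (\<Sum>k<N. if k = i then x $ k else 0)"
    using assms by (intro sum.cong) auto
  also have "\<dots> = x $ i" using assms by simp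
  finally show ?thesis by simp
qed

lemma clifford_expand:
  fixes x :: "'a::comm_ring_1 vec"
  shows "clifford n x \<omega> S = (\<Sum>k<2*n. x $ k * clifford n (unit_vec (2*n) k) \<omega> S)"
proof -
  have w: "wedge1 n (\<lambda>i. x $ i) \<omega> S = (\<Sum>k<2*n. x $ k * wedge1 n (\<lambda>i. unit_vec (2*n) k $ i) \<omega> S)"
    by (rule wedge1_lin, simp, rule coord_expand, simp)
  have c: "contr n (\<lambda>i. x $ (n+i)) \<omega> S = (\<Sum>k<2*n. x $ k * contr n (\<lambda>i. unit_vec (2*n) k $ (n+i)) \<omega> S)"
    by (rule contr_lin, simp, rule coord_expand, simp)
  show ?thesis unfolding clifford_def w c by (simp add: sum.distrib distrib_left)
qed



lemma clifford_even:
  assumes s: "s \<in> ext_odd n"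
  shows "clifford n x s \<in> ext_even n"
proof -
  have s0: "s T = 0" if "even (card T)" for T using s that unfolding ext_odd_def by auto
  have "clifford n x s S = 0" if odd: "odd (card S)" for S
  proof (cases "S \<subseteq> {..<n}")
    case True
    hence fin: "finite S" using finite_subset by blast
    have "wedge1 n (\<lambda>i. x $ i) s S = (\<Sum>i\<in>S. (-1) ^ card {j\<in>S. j < i} * x $ i * s (S - {i}))"
      unfolding wedge1_def using True by simp
    also have "\<dots> = 0"
    proof (rule sum.neutral, rule ballI)
      fix i assume i: "i \<in> S"
      have "card (S - {i}) = card S - 1" using i fin by (simp add: card_Diff_singleton)
      moreover have "card S \<ge> 1" using i fin by (metis One_nat_def Suc_leI card_gt_0_iff empty_iff)
      ultimately have "even (card (S - {i}))" using odd by simp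
      thus "(-1) ^ card {j\<in>S. j < i} * x $ i * s (S - {i}) = 0" using s0 by simp
    qed
    finally have w: "wedge1 n (\<lambda>i. x $ i) s S = 0" .
    have "contr n (\<lambda>i. x $ (n + i)) s S = (\<Sum>i\<in>{..<n} - S. (-1) ^ card {j\<in>S. j < i} * x $ (n + i) * s (insert i S))"
      unfolding contr_def using True by simp
    also have "\<dots> = 0"
    proof (rule sum.neutral, rule ballI)
      fix i assume i: "i \<in> {..<n} - S"
      have "card (insert i S) = Suc (card S)" using i fin by simp
      hence "even (card (insert i S))" using odd by simp
      thus "(-1) ^ card {j\<in>S. j < i} * x $ (n + i) * s (insert i S) = 0" using s0 by simp
    qed
    finally have c: "contr n (\<lambda>i. x $ (n + i)) s S = 0" .
    show ?thesis unfolding clifford_def using w c by simp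
  qed (simp add: clifford_def wedge1_def contr_def)
  moreover have "clifford n x s S = 0" if "\<not> S \<subseteq> {..<n}" for S
    using that by (simp add: clifford_def wedge1_def contr_def)
  ultimately show ?thesis unfolding ext_even_def ext_def by auto
qed


lemma lam_zero:
  assumes "even_functional n lam"
  shows "lam (\<lambda>S. 0) = 0"
proof -
  have z: "(\<lambda>S. 0) \<in> ext_even n" unfolding ext_even_def ext_def by auto
  have "lam (ext_smult 0 (\<lambda>S. 0)) = 0 * lam (\<lambda>S. 0)"
    using assms z unfolding even_functional_def by blast
  thus ?thesis by (simp add: ext_smult_def)
qed



lemma beta_unit1: "k < n \<Longrightarrow> beta n y (unit_vec (2*n) k) = y $ (n + k)"
proof -
  assume k: "k < n"
  have "beta n y (unit_vec (2*n) k) = (\<Sum>i<n. if i = k then y $ (n + i) else 0)"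
    unfolding beta_def using k by (intro sum.cong) auto
  thus ?thesis using k by simp
qed



lemma beta_unit2: "k < n \<Longrightarrow> beta n y (unit_vec (2*n) (n + k)) = y $ k"
proof -
  assume k: "k < n"
  have "beta n y (unit_vec (2*n) (n+k)) = (\<Sum>i<n. if i = k then y $ i else 0)"
    unfolding beta_def using k by (intro sum.cong) auto
  thus ?thesis using k by simp
qed





lemma lam_sum:
  assumes lam: "even_functional n lam" and F: "finite F" and om: "\<And>k. k \<in> F \<Longrightarrow> \<omega> k \<in> ext_even n"
  shows "lam (\<lambda>S. \<Sum>k\<in>F. c k * \<omega> k S) = (\<Sum>k\<in>F. c k * lam (\<omega> k))
     \<and> (\<lambda>S. \<Sum>k\<in>F. c k * \<omega> k S) \<in> ext_even n"
  using F om
proof (induction F rule: finite_induct)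
  case empty
  show ?case using lam_zero[OF lam] by (simp add: ext_even_def ext_def)
next
  case (insert a F)
  have oa: "\<omega> a \<in> ext_even n" using insert by auto
  have IH: "lam (\<lambda>S. \<Sum>k\<in>F. c k * \<omega> k S) = (\<Sum>k\<in>F. c k * lam (\<omega> k))"
    "(\<lambda>S. \<Sum>k\<in>F. c k * \<omega> k S) \<in> ext_even n" using insert by auto
  have sa: "ext_smult (c a) (\<omega> a) \<in> ext_even n" using oa unfolding ext_even_def ext_def ext_smult_def by auto
  have eq: "(\<lambda>S. \<Sum>k\<in>insert a F. c k * \<omega> k S) = (\<lambda>S. ext_smult (c a) (\<omega> a) S + (\<Sum>k\<in>F. c k * \<omega> k S))"
    using insert by (simp add: ext_smult_def)
  have "lam (\<lambda>S. ext_smult (c a) (\<omega> a) S + (\<Sum>k\<in>F. c k * \<omega> k S))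
      = lam (ext_smult (c a) (\<omega> a)) + lam (\<lambda>S. \<Sum>k\<in>F. c k * \<omega> k S)"
  proof -
    have add: "\<forall>\<omega>\<in>ext_even n. \<forall>\<eta>\<in>ext_even n. lam (\<lambda>S. \<omega> S + \<eta> S) = lam \<omega> + lam \<eta>"
      using lam unfolding even_functional_def by blast
    show ?thesis using add[rule_format, OF sa IH(2)] by simp
  qed
  also have "\<dots> = c a * lam (\<omega> a) + (\<Sum>k\<in>F. c k * lam (\<omega> k))"
    using lam oa IH(1) unfolding even_functional_def by auto
  finally show ?case unfolding eq using insert sa IH(2)
    by (auto simp: ext_even_def ext_def)
qed


lemma sum_split_add: "(\<Sum>k<n+m. f k) = (\<Sum>k<n. f k) + (\<Sum>k<m. f (n+k :: nat)) "
  by (induction m) (simp_all add: ac_simps)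

lemma beta_expand: "beta n y x = (\<Sum>k<2*n. x $ k * beta n y (unit_vec (2*n) k))"
proof -
  have "(\<Sum>k<2*n. x $ k * beta n y (unit_vec (2*n) k))
     = (\<Sum>k<n. x $ k * beta n y (unit_vec (2*n) k)) + (\<Sum>i<n. x $ (n+i) * beta n y (unit_vec (2*n) (n+i)))"
    unfolding mult_2 by (rule sum_split_add)
  also have "(\<Sum>i<n. x $ (n+i) * beta n y (unit_vec (2*n) (n+i))) = (\<Sum>i<n. x $ (n+i) * y $ i)"
    by (intro sum.cong) (auto simp: beta_unit2)
  also have "(\<Sum>k<n. x $ k * beta n y (unit_vec (2*n) k)) = (\<Sum>k<n. x $ k * y $ (n+k))"
    by (intro sum.cong) (auto simp: beta_unit1)
  finally show ?thesis unfolding beta_def by (simp add: sum.distrib ac_simps)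
qed


lemma phi_dual_char:
  fixes s :: "nat set \<Rightarrow> 'a::comm_ring_1"
  assumes y: "y \<in> carrier_vec (2*n)" and P: "\<forall>x\<in>carrier_vec (2*n). beta n y x = lam (clifford n x s)"
  shows "phi_dual n s lam = y"
  unfolding phi_dual_def
proof (rule the_equality)
  show "y \<in> carrier_vec (2 * n) \<and> (\<forall>x\<in>carrier_vec (2 * n). beta n y x = lam (clifford n x s))" using y P by auto
next
  fix y' assume H: "y' \<in> carrier_vec (2 * n) \<and> (\<forall>x\<in>carrier_vec (2 * n). beta n y' x = lam (clifford n x s))"
  have eqb: "beta n y' (unit_vec (2*n) k) = beta n y (unit_vec (2*n) k)" for k
    using H P by auto
  show "y' = y"
  proof (rule eq_vecI)
    fix i assume "i < dim_vec y"
    hence i: "i < 2 * n" using y by auto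
    show "y' $ i = y $ i"
    proof (cases "i < n")
      case True
      thus ?thesis using eqb[of "n + i"] beta_unit2[OF True] by metis
    next
      case False
      then obtain k where k: "i = n + k" "k < n" using i by (metis add_diff_inverse_nat add_less_imp_less_left mult_2)
      thus ?thesis using eqb[of k] beta_unit1[OF k(2)] by metis
    qed
  qed (use H y in auto)
qed



lemma phi_dual_exists:
  fixes s :: "nat set \<Rightarrow> 'a::comm_ring_1"
  assumes lam: "even_functional n lam" and s: "s \<in> ext_odd n"
  shows "\<exists>y\<in>carrier_vec (2*n). \<forall>x\<in>carrier_vec (2*n). beta n y x = lam (clifford n x s)"
proof -
  define y where "y = vec (2*n) (\<lambda>i. if i < n then lam (clifford n (unit_vec (2*n) (n+i)) s)
                                   else lam (clifford n (unit_vec (2*n) (i-n)) s))"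
  have y: "y \<in> carrier_vec (2*n)" unfolding y_def by auto
  have bu: "beta n y (unit_vec (2*n) k) = lam (clifford n (unit_vec (2*n) k) s)" if k: "k < 2*n" for k
  proof (cases "k < n")
    case True
    thus ?thesis using beta_unit1[OF True, of y] unfolding y_def by simp
  next
    case False
    then obtain i where i: "k = n + i" "i < n" using k by (metis add_diff_inverse_nat add_less_imp_less_left mult_2)
    thus ?thesis using beta_unit2[OF i(2), of y] unfolding y_def by simp
  qed
  have "beta n y x = lam (clifford n x s)" for x
  proof -
    have "beta n y x = (\<Sum>k<2*n. x $ k * lam (clifford n (unit_vec (2*n) k) s))"
      unfolding beta_expand[of n y x] by (intro sum.cong) (auto simp: bu)
    also have "\<dots> = lam (\<lambda>S. \<Sum>k<2*n. x $ k * clifford n (unit_vec (2*n) k) s S)"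
      using lam_sum[OF lam, of "{..<2*n}" "\<lambda>k. clifford n (unit_vec (2*n) k) s" "\<lambda>k. x $ k"]
        clifford_even[OF s] by auto
    also have "(\<lambda>S. \<Sum>k<2*n. x $ k * clifford n (unit_vec (2*n) k) s S) = clifford n x s"
      using clifford_expand[of n x s] by auto
    finally show ?thesis .
  qed
  thus ?thesis using y by blast
qed





lemma Jmat_apply:
  assumes y: "y \<in> carrier_vec (2*n)" and i: "i < 2*n"
  shows "(Jmat n *\<^sub>v y) $ i = (if i < n then y $ (i + n) else y $ (i - n))"
proof -
  define t where "t = (if i < n then i + n else i - n)"
  have t: "t < 2*n" using i unfolding t_def by auto
  have "(Jmat n *\<^sub>v y) $ i = (\<Sum>j<2*n. (if j = i + n \<or> i = j + n then 1 else 0) * y $ j)"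
    using i y unfolding Jmat_def by (auto simp: scalar_prod_def lessThan_atLeast0 intro!: sum.cong)
  also have "\<dots> = (\<Sum>j<2*n. if j = t then y $ j else 0)"
    using i unfolding t_def by (intro sum.cong) auto
  also have "\<dots> = y $ t" using t by simp
  finally show ?thesis unfolding t_def by simp
qed

lemma transp_apply:
  fixes d3 :: "'a::comm_ring_1 mat"
  assumes d3: "d3 \<in> carrier_mat N m" and w: "w \<in> carrier_vec N" and k: "k < m"
  shows "(transpose_mat d3 *\<^sub>v w) $ k = (\<Sum>i<N. d3 $$ (i, k) * w $ i)"
  using d3 w k by (auto simp: scalar_prod_def lessThan_atLeast0 intro!: sum.cong)

lemma d2_apply:
  fixes d3 :: "'a::comm_ring_1 mat"
  assumes d3: "d3 \<in> carrier_mat (2*n) m" and y: "y \<in> carrier_vec (2*n)" and k: "k < m"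
  shows "((transpose_mat d3 * Jmat n) *\<^sub>v y) $ k = beta n y (d3 *\<^sub>v unit_vec m k)"
proof -
  have J: "Jmat n \<in> carrier_mat (2*n) (2*n)" unfolding Jmat_def by auto
  have "(transpose_mat d3 * Jmat n) *\<^sub>v y = transpose_mat d3 *\<^sub>v (Jmat n *\<^sub>v y)"
    using d3 J y by (metis assoc_mult_mat_vec transpose_carrier_mat)
  hence "((transpose_mat d3 * Jmat n) *\<^sub>v y) $ k = (\<Sum>i<2*n. d3 $$ (i, k) * (Jmat n *\<^sub>v y) $ i)"
    using transp_apply[OF d3 _ k, of "Jmat n *\<^sub>v y"] J y mult_mat_vec_carrier by metis
  also have "\<dots> = (\<Sum>i<2*n. d3 $$ (i, k) * (if i < n then y $ (i + n) else y $ (i - n)))"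
    using Jmat_apply[OF y] by (intro sum.cong) auto
  also have "\<dots> = (\<Sum>i<n. d3 $$ (i, k) * y $ (i + n)) + (\<Sum>i<n. d3 $$ (n + i, k) * y $ i)"
    unfolding mult_2 by (subst sum_split_add) simp
  also have "\<dots> = beta n y (d3 *\<^sub>v unit_vec m k)"
    unfolding beta_def using d3 k by (auto simp: sum.distrib ac_simps intro!: sum.cong)
  finally show ?thesis .
qed

theorem mainTheorem7:
  fixes p q :: nat
    and d1 d2 d3 d4 :: "'a::{factorial_semiring, idom} mat"
    and s :: "nat set \<Rightarrow> 'a"
  assumes noeth: "noetherian_ring TYPE('a)"
    and half: "is_unit (2::'a)"
    and p: "p \<ge> 1" and q: "q \<ge> 3"
    and d4: "d4 \<in> carrier_mat (p + q) (q - 2)"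
    and d3: "d3 \<in> carrier_mat (2 * (p + 2)) (p + q)"
    and d2: "d2 = transpose_mat d3 * Jmat (p + 2)"
    and d1: "d1 = transpose_mat d4"
    and cx43: "d3 * d4 = 0\<^sub>m (2 * (p + 2)) (q - 2)"
    and cx32: "d2 * d3 = 0\<^sub>m (p + q) (p + q)"
    and cx21: "d1 * d2 = 0\<^sub>m (q - 2) (2 * (p + 2))"
    and inj4: "\<forall>v\<in>carrier_vec (q - 2). d4 *\<^sub>v v = 0\<^sub>v (p + q) \<longrightarrow> v = 0\<^sub>v (q - 2)"
    and ex3: "exact_at (p + q) d3 d4"
    and ex2: "exact_at (2 * (p + 2)) d2 d3"
    and ex1: "exact_at (p + q) d1 d2"
    and s_odd: "s \<in> ext_odd (p + 2)"
    and s_gen: "\<forall>P. is_prime_ideal P \<longrightarrow> not_in_supp_coker P (q - 2) d1 \<longrightarrow>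
                  loc_generates_annihilator P (p + 2) d3 s"
  shows "(\<forall>lam. even_functional (p + 2) lam \<longrightarrow>
            (\<exists>b\<in>carrier_vec (p + q). d3 *\<^sub>v b = phi_dual (p + 2) s lam))
       \<and> (\<exists>u\<in>carrier_vec (p + q).
            d3 *\<^sub>v u = vec (2 * (p + 2)) (\<lambda>i. if i < p + 2 then s {i} else 0))"
proof -
  let ?n = "p + 2"
  have prime0: "is_prime_ideal {0::'a}"
    unfolding is_prime_ideal_def is_ideal_def by auto
  have nis: "not_in_supp_coker {0} (q - 2) d1"
    unfolding not_in_supp_coker_def
  proof
    fix y :: "'a vec" assume y: "y \<in> carrier_vec (q - 2)"
    from domain_surj[OF d4 inj4 y] obtain u z where u: "u \<noteq> 0" and z: "z \<in> carrier_vec (p + q)"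
      and tz: "transpose_mat d4 *\<^sub>v z = u \<cdot>\<^sub>v y" by blast
    have "dim_col d1 = p + q" using d1 d4 by auto
    thus "\<exists>u. u \<notin> {0} \<and> (\<exists>z\<in>carrier_vec (dim_col d1). d1 *\<^sub>v z = u \<cdot>\<^sub>v y)"
      using u z tz d1 by auto
  qed
  have la: "loc_annihilated {0} ?n d3 s"
    using s_gen prime0 nis unfolding loc_generates_annihilator_def by blast
  have annih: "clifford ?n (d3 *\<^sub>v b) s = (\<lambda>S. 0)" if b: "b \<in> carrier_vec (p + q)" for b
  proof -
    have "dim_col d3 = p + q" using d3 by auto
    with la b obtain u where u: "u \<noteq> 0" and e: "ext_smult u (clifford ?n (d3 *\<^sub>v b) s) = (\<lambda>S. 0)"
      unfolding loc_annihilated_def by auto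
    show ?thesis
    proof
      fix S
      have "u * clifford ?n (d3 *\<^sub>v b) s S = 0" using fun_cong[OF e, of S] by (simp add: ext_smult_def)
      thus "clifford ?n (d3 *\<^sub>v b) s S = 0" using u by simp
    qed
  qed
  have part1: "\<exists>b\<in>carrier_vec (p + q). d3 *\<^sub>v b = phi_dual ?n s lam"
    if lam: "even_functional ?n lam" for lam
  proof -
    obtain y where y: "y \<in> carrier_vec (2 * ?n)"
      and yP: "\<forall>x\<in>carrier_vec (2 * ?n). beta ?n y x = lam (clifford ?n x s)"
      using phi_dual_exists[OF lam s_odd] by blast
    have pd: "phi_dual ?n s lam = y" by (rule phi_dual_char[OF y yP])
    have "d2 *\<^sub>v y = 0\<^sub>v (dim_row d2)"
    proof (rule eq_vecI)
      fix k assume "k < dim_vec (0\<^sub>v (dim_row d2) :: 'a vec)"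
      hence k: "k < p + q" using d2 d3 by auto
      have "(d2 *\<^sub>v y) $ k = beta ?n y (d3 *\<^sub>v unit_vec (p + q) k)"
        unfolding d2 by (rule d2_apply[OF d3 y k])
      also have "\<dots> = lam (clifford ?n (d3 *\<^sub>v unit_vec (p + q) k) s)"
        using yP d3 by auto
      also have "\<dots> = 0" using annih[of "unit_vec (p + q) k"] lam_zero[OF lam] by simp
      finally show "(d2 *\<^sub>v y) $ k = 0\<^sub>v (dim_row d2) $ k" using k d2 d3 by simp
    qed (use d2 d3 in auto)
    with ex2 y obtain w where w: "w \<in> carrier_vec (dim_col d3)" and dw: "d3 *\<^sub>v w = y"
      unfolding exact_at_def by blast
    show ?thesis using w dw pd d3 by auto
  qed
  define lam0 :: "(nat set \<Rightarrow> 'a) \<Rightarrow> 'a" where "lam0 = (\<lambda>\<omega>. \<omega> {})"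
  have lam0: "even_functional ?n lam0"
    unfolding even_functional_def lam0_def ext_smult_def by auto
  define v where "v = vec (2 * ?n) (\<lambda>i. if i < ?n then s {i} else (0::'a))"
  have v: "v \<in> carrier_vec (2 * ?n)" unfolding v_def by auto
  have vP: "\<forall>x\<in>carrier_vec (2 * ?n). beta ?n v x = lam0 (clifford ?n x s)"
  proof
    fix x :: "'a vec"
    have "beta ?n v x = (\<Sum>i<?n. x $ (?n + i) * s {i})"
      unfolding beta_def v_def by (intro sum.cong) auto
    also have "\<dots> = lam0 (clifford ?n x s)"
      unfolding lam0_def clifford_def wedge1_def contr_def by simp
    finally show "beta ?n v x = lam0 (clifford ?n x s)" .
  qed
  have "phi_dual ?n s lam0 = v" by (rule phi_dual_char[OF v vP])
  with part1[OF lam0] have "\<exists>u\<in>carrier_vec (p + q). d3 *\<^sub>v u = v" by simp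
  thus ?thesis using part1 unfolding v_def by blast
qed


end
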